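(* Let $n\ge4$ be even. Let the additive group $\Lambda=\mathbb R^n$ act on $\mathbb R^{E_n}$ by $\lambda\cdot y=(\lambda_i+\lambda_j+y_{\{i,j\}})_{\{i,j\}\in E_n}$ for $\lambda\in\Lambda$, $y\in\mathbb R^{E_n}$. Then every $\Lambda$-invariant subset of $\mathbb R^{E_n}$ is fiber-invariant for the linear map $f:\mathbb R^{E_n}\to\mathbb R^{\mathcal M_n}$, $f(y)=(y_M)_{M\in\mathcal M_n}$, where $y_M=\sum_{e\in M}y_e$.
   Context: $E_n$ is the set of edges of the complete graph on $[n]=\{1,\dots,n\}$ and $\mathcal M_n$ is the set of its perfect matchings. For a map $f:X\to Y$, $D\subseteq X$ is fiber-invariant for $f$ if for each $y\in f(D)$ the fiber $f^{-1}(y)$ is contained in $D$. *)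

theory Defs
  imports Complex_Main "HOL-Library.FuncSet"
begin

definition edges :: "nat \<Rightarrow> nat set set" where
  "edges n = {e. e \<subseteq> {1..n} \<and> card e = 2}"

definition matchings :: "nat \<Rightarrow> nat set set set" where
  "matchings n = {M. M \<subseteq> edges n \<and>
      (\<forall>e\<in>M. \<forall>e'\<in>M. e \<noteq> e' \<longrightarrow> e \<inter> e' = {}) \<and> \<Union>M = {1..n}}"

definition RE :: "nat \<Rightarrow> (nat set \<Rightarrow> real) set" where
  "RE n = edges n \<rightarrow>\<^sub>E (UNIV :: real set)"

definition Lam :: "nat \<Rightarrow> (nat \<Rightarrow> real) set" where
  "Lam n = {1..n} \<rightarrow>\<^sub>E (UNIV :: real set)"

definition act :: "nat \<Rightarrow> (nat \<Rightarrow> real) \<Rightarrow> (nat set \<Rightarrow> real) \<Rightarrow> (nat set \<Rightarrow> real)" where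
  "act n lam y = (\<lambda>e\<in>edges n. (\<Sum>i\<in>e. lam i) + y e)"

definition Lam_invariant :: "nat \<Rightarrow> (nat set \<Rightarrow> real) set \<Rightarrow> bool" where
  "Lam_invariant n D \<longleftrightarrow> (\<forall>lam\<in>Lam n. \<forall>y\<in>D. act n lam y \<in> D)"

definition fmap :: "nat \<Rightarrow> (nat set \<Rightarrow> real) \<Rightarrow> (nat set set \<Rightarrow> real)" where
  "fmap n y = (\<lambda>M\<in>matchings n. \<Sum>e\<in>M. y e)"

definition fiber_invariant :: "'a set \<Rightarrow> ('a \<Rightarrow> 'b) \<Rightarrow> 'a set \<Rightarrow> bool" where
  "fiber_invariant X f D \<longleftrightarrow> (\<forall>y\<in>f ` D. {x\<in>X. f x = y} \<subseteq> D)"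

end

theory Submission
  imports Defs
begin

lemma ex_pm:
  "finite S \<Longrightarrow> even (card S) \<Longrightarrow> \<exists>M. finite M \<and> (\<forall>e\<in>M. e \<subseteq> S \<and> card e = 2) \<and>
     (\<forall>e\<in>M. \<forall>e'\<in>M. e \<noteq> e' \<longrightarrow> e \<inter> e' = {}) \<and> \<Union>M = S"
proof (induction "card S" arbitrary: S rule: less_induct)
  case less
  show ?case
  proof (cases "S = {}")
    case True
    then show ?thesis by (intro exI[of _ "{}"]) auto
  next
    case False
    then obtain a where a: "a \<in> S" by auto
    have "card S \<noteq> 1" using less.prems by auto
    then have "S - {a} \<noteq> {}" using a less.prems(1)
      by (metis False card_1_singletonE insert_Diff_single insert_absorb2 is_singletonI' is_singleton_altdef Diff_empty empty_iff insert_absorb singletonD)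
    then obtain b where b: "b \<in> S" "b \<noteq> a" by auto
    define S' where "S' = S - {a, b}"
    have cS': "card S' = card S - 2" unfolding S'_def using a b less.prems(1)
      by (simp add: card_Diff_subset)
    have "{a,b} \<subseteq> S" using a b by auto
    then have "card {a,b} \<le> card S" using less.prems(1) by (rule card_mono[rotated])
    then have "card S \<ge> 2" using b by simp
    then have "card S' < card S" "even (card S')" using cS' less.prems(2) by auto
    moreover have "finite S'" using less.prems(1) S'_def by auto
    ultimately obtain M' where M': "finite M'" "\<forall>e\<in>M'. e \<subseteq> S' \<and> card e = 2"
      "\<forall>e\<in>M'. \<forall>e'\<in>M'. e \<noteq> e' \<longrightarrow> e \<inter> e' = {}" "\<Union>M' = S'"
      using less.hyps[of S'] by blast
    show ?thesis
    proof (intro exI[of _ "insert {a,b} M'"] conjI)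
      show "finite (insert {a, b} M')" using M' by auto
      show "\<forall>e\<in>insert {a, b} M'. e \<subseteq> S \<and> card e = 2" using M' a b S'_def by auto
      show "\<forall>e\<in>insert {a, b} M'. \<forall>e'\<in>insert {a, b} M'. e \<noteq> e' \<longrightarrow> e \<inter> e' = {}"
      proof -
        have dM: "e \<inter> {a,b} = {}" if "e \<in> M'" for e using M'(2) that unfolding S'_def by blast
        show ?thesis using M'(3) dM by blast
      qed
      show "\<Union> (insert {a, b} M') = S" using M' S'_def a b by auto
    qed
  qed
qed

lemma four_point:
  fixes z :: "nat set \<Rightarrow> real"
  assumes ev: "even n" and n4: "n \<ge> 4"
    and z0: "\<forall>M\<in>matchings n. (\<Sum>e\<in>M. z e) = 0"
    and ijkl: "i \<in> {1..n}" "j \<in> {1..n}" "k \<in> {1..n}" "l \<in> {1..n}"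
    and dist: "i \<noteq> j" "i \<noteq> k" "i \<noteq> l" "j \<noteq> k" "j \<noteq> l" "k \<noteq> l"
  shows "z {i,j} + z {k,l} = z {i,k} + z {j,l}"
proof -
  define S where "S = {1..n} - {i,j,k,l}"
  have "card {i,j,k,l} = 4" using dist by auto
  then have cS: "card S = n - 4" unfolding S_def using ijkl
    by (simp add: card_Diff_subset)
  then have evS: "even (card S)" using ev n4 by auto
  have fS: "finite S" unfolding S_def by auto
  obtain M' where M': "finite M'" "\<forall>e\<in>M'. e \<subseteq> S \<and> card e = 2"
      "\<forall>e\<in>M'. \<forall>e'\<in>M'. e \<noteq> e' \<longrightarrow> e \<inter> e' = {}" "\<Union>M' = S"
    using ex_pm[OF fS evS] by (elim exE conjE) blast
  have SS: "S \<subseteq> {1..n}" unfolding S_def by auto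
  have gen: "(\<Sum>e\<in>insert {a,b} (insert {c,d} M'). z e) = z {a,b} + z {c,d} + (\<Sum>e\<in>M'. z e)"
    if "a \<notin> S" "c \<notin> S" "a \<noteq> b" "a \<noteq> c" "a \<noteq> d" "b \<noteq> c" "b \<noteq> d" for a b c d
  proof -
    have nab: "{a,b} \<notin> M'" using M'(2) that(1) by blast
    have ncd: "{c,d} \<notin> M'" using M'(2) that(2) by blast
    have "{a,b} \<noteq> {c,d}" using that by (auto simp: doubleton_eq_iff)
    then show ?thesis using nab ncd M'(1) by (simp add: sum.insert)
  qed
  have inM: "insert {a,b} (insert {c,d} M') \<in> matchings n"
    if nS: "a \<notin> S" "b \<notin> S" "c \<notin> S" "d \<notin> S"
      and abcd: "a \<in> {1..n}" "b \<in> {1..n}" "c \<in> {1..n}" "d \<in> {1..n}"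
      and cov: "{1..n} \<subseteq> S \<union> {a,b,c,d}"
      and ds: "a \<noteq> b" "a \<noteq> c" "a \<noteq> d" "b \<noteq> c" "b \<noteq> d" "c \<noteq> d" for a b c d
  proof -
    show ?thesis unfolding matchings_def edges_def
    proof (intro CollectI conjI)
      show "insert {a, b} (insert {c, d} M') \<subseteq> {e. e \<subseteq> {1..n} \<and> card e = 2}"
        using M'(2) SS abcd ds by auto
      have dM: "e \<inter> {a,b} = {}" "e \<inter> {c,d} = {}" if "e \<in> M'" for e
        using M'(2) that nS by blast+
      have ad: "{a,b} \<inter> {c,d} = {}" using ds by auto
      show "\<forall>e\<in>insert {a, b} (insert {c, d} M'). \<forall>e'\<in>insert {a, b} (insert {c, d} M'). e \<noteq> e' \<longrightarrow> e \<inter> e' = {}"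
      proof (intro ballI impI)
        fix e e' assume "e \<in> insert {a, b} (insert {c, d} M')" "e' \<in> insert {a, b} (insert {c, d} M')" "e \<noteq> e'"
        then show "e \<inter> e' = {}" using M'(3) dM ad by (auto simp: Int_commute)
      qed
      show "\<Union> (insert {a, b} (insert {c, d} M')) = {1..n}"
        using M'(4) SS cov abcd by auto
    qed
  qed
  have nS: "i \<notin> S" "j \<notin> S" "k \<notin> S" "l \<notin> S" unfolding S_def by auto
  have cov: "{1..n} \<subseteq> S \<union> {i,j,k,l}" "{1..n} \<subseteq> S \<union> {i,k,j,l}" unfolding S_def by auto
  have m1: "insert {i,j} (insert {k,l} M') \<in> matchings n"
    by (rule inM) (use nS ijkl cov dist in auto)
  have m2: "insert {i,k} (insert {j,l} M') \<in> matchings n"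
    by (rule inM) (use nS ijkl cov dist in auto)
  have "z {i,j} + z {k,l} + (\<Sum>e\<in>M'. z e) = 0"
    using gen[where a=i and b=j and c=k and d=l] m1 z0 dist nS by simp
  moreover have "z {i,k} + z {j,l} + (\<Sum>e\<in>M'. z e) = 0"
    using gen[where a=i and b=k and c=j and d=l] m2 z0 dist nS by simp
  ultimately show ?thesis by linarith
qed

lemma edge_cases: "e \<in> edges n \<Longrightarrow> \<exists>i j. e = {i,j} \<and> i \<noteq> j \<and> i \<in> {1..n} \<and> j \<in> {1..n}"
proof -
  assume "e \<in> edges n"
  then have "e \<subseteq> {1..n}" "card e = 2" unfolding edges_def by auto
  then obtain i j where "e = {i,j}" "i \<noteq> j" by (meson card_2_iff)
  then show ?thesis using \<open>e \<subseteq> {1..n}\<close> by blast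
qed

lemma kernel:
  fixes z :: "nat set \<Rightarrow> real"
  assumes ev: "even n" and n4: "n \<ge> 4"
    and z0: "\<forall>M\<in>matchings n. (\<Sum>e\<in>M. z e) = 0"
  shows "\<exists>lam. \<forall>i\<in>{1..n}. \<forall>j\<in>{1..n}. i \<noteq> j \<longrightarrow> lam i + lam j = z {i,j}"
proof -
  note fp = four_point[OF ev n4 z0]
  define lam where "lam i = (if i = 1 then (z {1,2} + z {1,3} - z {2,3}) / 2
     else if i = 2 then (z {1,2} + z {2,3} - z {1,3}) / 2
     else (z {i,1} + z {i,2} - z {1,2}) / 2)" for i :: nat
  have c1: "lam 1 + lam i = z {1,i}" if "i \<in> {1..n}" "i \<noteq> 1" "i \<noteq> 2" for i
  proof (cases "i = 3")
    case True then show ?thesis by (simp add: lam_def insert_commute field_simps)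
  next
    case F3: False
    have "z {1,3} + z {2,i} = z {1,2} + z {3,i}" using fp[of 1 3 2 i] that F3 n4 by auto
    moreover have "z {1,i} + z {2,3} = z {1,2} + z {i,3}" using fp[of 1 i 2 3] that F3 n4 by auto
    ultimately show ?thesis using that by (simp add: lam_def insert_commute field_simps)
  qed
  have c2: "lam 2 + lam i = z {2,i}" if "i \<in> {1..n}" "i \<noteq> 1" "i \<noteq> 2" for i
  proof (cases "i = 3")
    case True then show ?thesis by (simp add: lam_def insert_commute field_simps)
  next
    case F3: False
    have "z {2,3} + z {1,i} = z {2,1} + z {3,i}" using fp[of 2 3 1 i] that F3 n4 by auto
    moreover have "z {2,i} + z {1,3} = z {2,1} + z {i,3}" using fp[of 2 i 1 3] that F3 n4 by auto
    ultimately show ?thesis using that by (simp add: lam_def insert_commute field_simps)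
  qed
  have c3: "lam i + lam j = z {i,j}" if "i \<in> {1..n}" "j \<in> {1..n}" "i \<noteq> j"
     "i \<noteq> 1" "i \<noteq> 2" "j \<noteq> 1" "j \<noteq> 2" for i j
  proof -
    have "z {i,1} + z {j,2} = z {i,j} + z {1,2}" using fp[of i 1 j 2] that n4 by auto
    moreover have "z {i,2} + z {j,1} = z {i,j} + z {2,1}" using fp[of i 2 j 1] that n4 by auto
    ultimately show ?thesis using that by (simp add: lam_def insert_commute field_simps)
  qed
  have "lam i + lam j = z {i,j}" if "i \<in> {1..n}" "j \<in> {1..n}" "i \<noteq> j" for i j
  proof -
    have "lam 1 + lam 2 = z {1,2}" by (simp add: lam_def field_simps)
    note b = this
    have b': "lam 2 + lam 1 = z {2,1}" using b by (simp add: insert_commute)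
    show ?thesis
    proof (cases "i = 1")
      case True then show ?thesis using b c1[of j] that by (cases "j = 2") auto
    next
      case n1: False
      show ?thesis
      proof (cases "i = 2")
        case True then show ?thesis using b' c2[of j] that by (cases "j = 1") auto
      next
        case n2: False
        show ?thesis
        proof (cases "j = 1")
          case True then show ?thesis using c1[of i] that n1 n2 by (simp add: insert_commute add.commute)
        next
          case m1: False
          show ?thesis
          proof (cases "j = 2")
            case True then show ?thesis using c2[of i] that n1 n2 by (simp add: insert_commute add.commute)
          next
            case False then show ?thesis using c3[of i j] that n1 n2 m1 by simp
          qed
        qed
      qed
    qed
  qed
  then show ?thesis by blast
qed

theorem theorem4p6:
  fixes n :: nat and D :: "(nat set \<Rightarrow> real) set"
  assumes "even n" and "n \<ge> 4"
    and "D \<subseteq> RE n"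
    and "Lam_invariant n D"
  shows "fiber_invariant (RE n) (fmap n) D"
  unfolding fiber_invariant_def
proof (intro ballI subsetI)
  fix w x assume w: "w \<in> fmap n ` D" and x: "x \<in> {x \<in> RE n. fmap n x = w}"
  then obtain y where y: "y \<in> D" "fmap n y = w" by auto
  have xR: "x \<in> RE n" and fx: "fmap n x = fmap n y" using x y by auto
  have yR: "y \<in> RE n" using y assms(3) by auto
  define z where "z e = x e - y e" for e
  have z0: "\<forall>M\<in>matchings n. (\<Sum>e\<in>M. z e) = 0"
  proof
    fix M assume M: "M \<in> matchings n"
    have "(\<Sum>e\<in>M. x e) = (\<Sum>e\<in>M. y e)" using fun_cong[OF fx, of M] M by (simp add: fmap_def)
    then show "(\<Sum>e\<in>M. z e) = 0" by (simp add: z_def sum_subtractf)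
  qed
  obtain lam where lam: "\<forall>i\<in>{1..n}. \<forall>j\<in>{1..n}. i \<noteq> j \<longrightarrow> lam i + lam j = z {i,j}"
    using kernel[OF assms(1,2) z0] by blast
  define lam' where "lam' = restrict lam {1..n}"
  have "lam' \<in> Lam n" unfolding lam'_def Lam_def by auto
  then have "act n lam' y \<in> D" using assms(4) y(1) unfolding Lam_invariant_def by blast
  moreover have "act n lam' y = x"
  proof
    fix e show "act n lam' y e = x e"
    proof (cases "e \<in> edges n")
      case True
      then obtain i j where ij: "e = {i,j}" "i \<noteq> j" "i \<in> {1..n}" "j \<in> {1..n}"
        using edge_cases by blast
      have s: "(\<Sum>i\<in>e. lam' i) = lam i + lam j" using ij unfolding lam'_def by simp
      have "lam i + lam j = z {i,j}" using lam ij by blast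
      then show ?thesis using True s ij unfolding act_def z_def by simp
    next
      case False
      then show ?thesis using xR unfolding act_def RE_def by auto
    qed
  qed
  ultimately show "x \<in> D" by simp
qed

end
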